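(* Let $G$ be a finite simple graph with an initial configuration $c_0$ and let $u,v\in V(G)$ satisfy $N(u)=N(v)$ or $N[u]=N[v]$. Then for every integer $t\geq0$, $|c_t(u)-c_t(v)|\leq\max\{|c_0(u)-c_0(v)|,\ 2\deg(u)\}$.
   Context: Diffusion process: for a configuration $c_t:V(G)\to\mathbb{Z}$, $c_{t+1}(w)=c_t(w)-|\{x\in N(w): c_t(w)>c_t(x)\}|+|\{x\in N(w): c_t(w)<c_t(x)\}|$ for all $w$ simultaneously. $N(u)$ is the open neighbourhood and $N[u]=N(u)\cup\{u\}$ the closed neighbourhood. *)

theory Defs
  imports Main
begin

definition simple_graph :: "'a set \<Rightarrow> ('a \<Rightarrow> 'a \<Rightarrow> bool) \<Rightarrow> bool" where
  "simple_graph V E \<longleftrightarrow> finite V \<and> (\<forall>x y. E x y \<longrightarrow> x \<in> V \<and> y \<in> V)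
     \<and> (\<forall>x y. E x y \<longrightarrow> E y x) \<and> (\<forall>x. \<not> E x x)"

definition nbhd :: "'a set \<Rightarrow> ('a \<Rightarrow> 'a \<Rightarrow> bool) \<Rightarrow> 'a \<Rightarrow> 'a set" where
  "nbhd V E u = {x \<in> V. E u x}"

definition closed_nbhd :: "'a set \<Rightarrow> ('a \<Rightarrow> 'a \<Rightarrow> bool) \<Rightarrow> 'a \<Rightarrow> 'a set" where
  "closed_nbhd V E u = insert u (nbhd V E u)"

definition degree :: "'a set \<Rightarrow> ('a \<Rightarrow> 'a \<Rightarrow> bool) \<Rightarrow> 'a \<Rightarrow> nat" where
  "degree V E u = card (nbhd V E u)"

definition diffusion_step ::
  "'a set \<Rightarrow> ('a \<Rightarrow> 'a \<Rightarrow> bool) \<Rightarrow> ('a \<Rightarrow> int) \<Rightarrow> ('a \<Rightarrow> int)" where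
  "diffusion_step V E c = (\<lambda>w. c w
      - int (card {x \<in> nbhd V E w. c w > c x})
      + int (card {x \<in> nbhd V E w. c w < c x}))"

definition diffusion :: "'a set \<Rightarrow> ('a \<Rightarrow> 'a \<Rightarrow> bool) \<Rightarrow> ('a \<Rightarrow> int) \<Rightarrow> nat \<Rightarrow> ('a \<Rightarrow> int)" where
  "diffusion V E c0 t = (diffusion_step V E ^^ t) c0"

end

theory Submission
  imports Defs
begin

lemma step_eq:
  assumes "finite V"
  shows "diffusion_step V E c w = c w + (\<Sum>x\<in>nbhd V E w. sgn (c x - c w))"
proof -
  have fin: "finite (nbhd V E w)" using assms by (simp add: nbhd_def)
  have "(\<Sum>x\<in>nbhd V E w. sgn (c x - c w))
      = (\<Sum>x\<in>nbhd V E w. (if c w < c x then 1 else 0) - (if c w > c x then 1 else 0))"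
    by (rule sum.cong) (auto simp: sgn_if)
  also have "\<dots> = (\<Sum>x\<in>nbhd V E w. (if c w < c x then 1 else 0))
      - (\<Sum>x\<in>nbhd V E w. (if c w > c x then 1 else 0))"
    by (simp add: sum_subtractf)
  also have "\<dots> = int (card {x \<in> nbhd V E w. c w < c x}) - int (card {x \<in> nbhd V E w. c w > c x})"
    using fin by (simp add: sum.If_cases Int_def)
  finally show ?thesis unfolding diffusion_step_def by simp
qed

lemma sgn_diff_bounds:
  fixes a b y :: int
  assumes "b \<le> a"
  shows "-2 \<le> sgn (y - a) - sgn (y - b) \<and> sgn (y - a) - sgn (y - b) \<le> 0"
  using assms by (auto simp: sgn_if)

lemma sum_bounds:
  fixes a b :: int
  assumes "finite M" "b \<le> a"
  shows "- 2 * int (card M) \<le> (\<Sum>x\<in>M. sgn (c x - a) - sgn (c x - b))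
     \<and> (\<Sum>x\<in>M. sgn (c x - a) - sgn (c x - b)) \<le> 0"
proof
  have "(\<Sum>x\<in>M. (-2::int)) \<le> (\<Sum>x\<in>M. sgn (c x - a) - sgn (c x - b))"
    by (rule sum_mono) (use sgn_diff_bounds[OF assms(2)] in blast)
  then show "- 2 * int (card M) \<le> (\<Sum>x\<in>M. sgn (c x - a) - sgn (c x - b))" by simp
  show "(\<Sum>x\<in>M. sgn (c x - a) - sgn (c x - b)) \<le> 0"
    by (rule sum_nonpos) (use sgn_diff_bounds[OF assms(2)] in blast)
qed

lemma step_ge:
  assumes g: "simple_graph V E"
    and nb: "nbhd V E u = nbhd V E v \<or> closed_nbhd V E u = closed_nbhd V E v"
    and ab: "c v \<le> c u"
  shows "\<bar>diffusion_step V E c u - diffusion_step V E c v\<bar>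
           \<le> max \<bar>c u - c v\<bar> (2 * int (degree V E u))"
proof -
  have finV: "finite V" using g by (simp add: simple_graph_def)
  have irr: "\<And>x. x \<notin> nbhd V E x" using g by (simp add: simple_graph_def nbhd_def)
  define a where "a = c u"
  define b where "b = c v"
  define d where "d = degree V E u"
  have fN: "finite (nbhd V E u)" using finV by (simp add: nbhd_def)
  have "\<exists>T. diffusion_step V E c u - diffusion_step V E c v = (a - b) + T
          \<and> -2 * int d \<le> T \<and> T \<le> 0"
  proof (cases "nbhd V E u = nbhd V E v")
    case True
    let ?T = "\<Sum>x\<in>nbhd V E u. sgn (c x - a) - sgn (c x - b)"
    have "diffusion_step V E c u - diffusion_step V E c v = (a - b) + ?T"
      using True by (simp add: step_eq[OF finV] a_def b_def sum_subtractf)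
    moreover have "-2 * int d \<le> ?T \<and> ?T \<le> 0"
      using sum_bounds[OF fN, of b a c] ab by (simp add: a_def b_def d_def degree_def)
    ultimately show ?thesis by blast
  next
    case False
    then have cl: "closed_nbhd V E u = closed_nbhd V E v" using nb by blast
    have uv: "u \<noteq> v" using False by blast
    define M where "M = nbhd V E u - {v}"
    have "u \<in> nbhd V E v" using cl uv unfolding closed_nbhd_def by blast
    then have vin: "v \<in> nbhd V E u" using g unfolding nbhd_def simple_graph_def by blast
    have Nu: "nbhd V E u = insert v M" using vin M_def by blast
    have Nv: "nbhd V E v = insert u M" using cl uv irr[of u] irr[of v]
      unfolding closed_nbhd_def M_def by blast
    have uM: "u \<notin> M" using irr[of u] M_def by blast
    have vM: "v \<notin> M" using M_def by blast
    have fM: "finite M" using fN M_def by simp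
    have cM: "card (nbhd V E u) = Suc (card M)" using Nu fM vM by simp
    let ?T = "(\<Sum>x\<in>M. sgn (c x - a) - sgn (c x - b)) + (sgn (b - a) - sgn (a - b))"
    have "diffusion_step V E c u - diffusion_step V E c v = (a - b) + ?T"
      using fM uM vM by (simp add: step_eq[OF finV] Nu Nv a_def b_def sum_subtractf)
    moreover have "-2 * int d \<le> ?T \<and> ?T \<le> 0"
    proof -
      have "- 2 * int (card M) \<le> (\<Sum>x\<in>M. sgn (c x - a) - sgn (c x - b))
         \<and> (\<Sum>x\<in>M. sgn (c x - a) - sgn (c x - b)) \<le> 0"
        using sum_bounds[OF fM, of b a c] ab by (simp add: a_def b_def)
      moreover have "-2 \<le> sgn (b - a) - sgn (a - b) \<and> sgn (b - a) - sgn (a - b) \<le> (0::int)"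
        using ab by (auto simp: sgn_if a_def b_def)
      moreover have "int d = int (card M) + 1" using cM by (simp add: d_def degree_def)
      ultimately show ?thesis by linarith
    qed
    ultimately show ?thesis by blast
  qed
  then obtain T where "diffusion_step V E c u - diffusion_step V E c v = (a - b) + T"
    "-2 * int d \<le> T" "T \<le> 0" by blast
  moreover have "0 \<le> a - b" using ab a_def b_def by simp
  ultimately show ?thesis unfolding a_def[symmetric] b_def[symmetric] d_def[symmetric]
    by (simp add: abs_le_iff max_def)
qed

lemma deg_eq:
  assumes g: "simple_graph V E"
    and nb: "nbhd V E u = nbhd V E v \<or> closed_nbhd V E u = closed_nbhd V E v"
  shows "degree V E u = degree V E v"
proof -
  have finV: "finite V" using g by (simp add: simple_graph_def)
  have irr: "\<And>x. x \<notin> nbhd V E x" using g by (simp add: simple_graph_def nbhd_def)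
  have f: "\<And>x. finite (nbhd V E x)" using finV by (simp add: nbhd_def)
  show ?thesis
  proof (cases "nbhd V E u = nbhd V E v")
    case True then show ?thesis by (simp add: degree_def)
  next
    case False
    then have "card (insert u (nbhd V E u)) = card (insert v (nbhd V E v))"
      using nb by (simp add: closed_nbhd_def)
    then show ?thesis using f irr by (simp add: degree_def)
  qed
qed

lemma step_bound:
  assumes g: "simple_graph V E"
    and nb: "nbhd V E u = nbhd V E v \<or> closed_nbhd V E u = closed_nbhd V E v"
  shows "\<bar>diffusion_step V E c u - diffusion_step V E c v\<bar>
           \<le> max \<bar>c u - c v\<bar> (2 * int (degree V E u))"
proof (cases "c v \<le> c u")
  case True then show ?thesis using step_ge[OF g nb] by blast
next
  case False
  have nb': "nbhd V E v = nbhd V E u \<or> closed_nbhd V E v = closed_nbhd V E u" using nb by metis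
  have "\<bar>diffusion_step V E c v - diffusion_step V E c u\<bar>
           \<le> max \<bar>c v - c u\<bar> (2 * int (degree V E v))"
    using step_ge[OF g nb', of c] False by simp
  then show ?thesis using deg_eq[OF g nb] by (simp add: abs_minus_commute)
qed

theorem lemma10:
  fixes V :: "'a set" and E :: "'a \<Rightarrow> 'a \<Rightarrow> bool" and c0 :: "'a \<Rightarrow> int"
    and u v :: 'a and t :: nat
  assumes "simple_graph V E"
    and "u \<in> V" and "v \<in> V"
    and "nbhd V E u = nbhd V E v \<or> closed_nbhd V E u = closed_nbhd V E v"
  shows "\<bar>diffusion V E c0 t u - diffusion V E c0 t v\<bar>
           \<le> max \<bar>c0 u - c0 v\<bar> (2 * int (degree V E u))"
proof (induction t)
  case 0 then show ?case by (simp add: diffusion_def)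
next
  case (Suc t)
  have "diffusion V E c0 (Suc t) = diffusion_step V E (diffusion V E c0 t)"
    by (simp add: diffusion_def)
  then show ?case using step_bound[OF assms(1) assms(4), of "diffusion V E c0 t"] Suc
    by (simp add: max_def split: if_splits)
qed

end
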